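(* Let $q$ be a prime power for which there exist $a,b\in\mathbb F_q^*$ and integers $0<m<n<q$ such that $f(x)=ax^m+bx^n$ permutes $\mathbb F_q$. Then, for any generator $w$ of $\mathbb F_q^*$, the group $G(q)$ contains the permutation of $\mathbb F_q^*$ induced by $c\mapsto wc$, and this permutation is a $(q-1)$-cycle.
   Context: $\mathbb F_q$ is the field with $q$ elements, $\mathbb F_q^*$ its multiplicative group. A polynomial permutes $\mathbb F_q$ if the induced map on $\mathbb F_q$ is a bijection. $G(q)$ denotes the group of permutations of $\mathbb F_q^*$ generated by all permutations of $\mathbb F_q^*$ which can be represented as $c\mapsto ac^m+bc^n$ with $a,b\in\mathbb F_q^*$ and integers $0<m<n<q$. *)

theory Defs
  imports Main "HOL-Library.Cardinality" "HOL-Combinatorics.Cycles" "HOL-Combinatorics.Permutations"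
begin

text \<open>Permutations of F_q^* are represented as maps on the field permuting
  the set of nonzero elements (and fixing 0), i.e. p permutes (UNIV - {0}).\<close>

definition binom_perms :: "('a::{finite,field} \<Rightarrow> 'a) set" where
  "binom_perms = {f. (\<exists>a b (m::nat) (n::nat). a \<noteq> 0 \<and> b \<noteq> 0 \<and> 0 < m \<and> m < n \<and> n < CARD('a)
      \<and> f = (\<lambda>c. a * c ^ m + b * c ^ n)) \<and> (f permutes (UNIV - {0}))}"

inductive_set G :: "('a::{finite,field} \<Rightarrow> 'a) set" where
  G_id: "id \<in> G"
| G_mult: "f \<in> binom_perms \<Longrightarrow> g \<in> G \<Longrightarrow> f \<circ> g \<in> G"
| G_inv: "f \<in> binom_perms \<Longrightarrow> g \<in> G \<Longrightarrow> inv f \<circ> g \<in> G"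

end

theory Submission
  imports Defs
begin

lemma G_part:
  fixes w a b :: "'a::{finite,field}"
  assumes "a \<noteq> 0" "b \<noteq> 0" "0 < m" "m < n" "n < CARD('a)"
    and bf: "bij (\<lambda>x. a * x ^ m + b * x ^ n)" and w: "w \<noteq> 0"
  shows "(\<lambda>c. w * c) \<in> (G :: ('a \<Rightarrow> 'a) set)"
proof -
  define f where "f = (\<lambda>x::'a. a * x ^ m + b * x ^ n)"
  define g where "g = (\<lambda>x::'a. (w*a) * x ^ m + (w*b) * x ^ n)"
  have gf: "g = (\<lambda>c. w * c) \<circ> f" unfolding g_def f_def by (auto simp: algebra_simps)
  have bij_mult: "bij (\<lambda>c::'a. w * c)"
    by (rule bij_betwI[where g="\<lambda>c. inverse w * c"]) (auto simp: w)
  have fb: "bij f" using bf f_def by simp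
  have gb: "bij g" using gf fb bij_mult bij_comp by metis
  have f0: "f 0 = 0" "g 0 = 0" using assms(3,4) by (auto simp: f_def g_def power_0_left)
  have perm: "h permutes (UNIV - {0})" if "bij h" "h 0 = (0::'a)" for h
    unfolding permutes_def
  proof (intro conjI allI impI)
    fix x :: 'a assume "x \<notin> UNIV - {0}" then show "h x = x" using that by simp
  next
    fix y :: 'a show "\<exists>!x. h x = y" using that(1) by (metis bij_pointE)
  qed
  have fB: "f \<in> binom_perms" unfolding binom_perms_def
    using assms perm[OF fb f0(1)] f_def by blast
  have gB: "g \<in> binom_perms" unfolding binom_perms_def mem_Collect_eq
  proof (intro conjI)
    show "\<exists>a' b' (m'::nat) (n'::nat). a' \<noteq> 0 \<and> b' \<noteq> 0 \<and> 0 < m' \<and> m' < n' \<and> n' < CARD('a)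
      \<and> g = (\<lambda>c. a' * c ^ m' + b' * c ^ n')"
      using assms w unfolding g_def by (intro exI[of _ "w*a"] exI[of _ "w*b"] exI[of _ m] exI[of _ n]) simp
    show "g permutes (UNIV - {0})" by (rule perm[OF gb f0(2)])
  qed
  have "inv f \<circ> id \<in> G" by (rule G_inv[OF fB G_id])
  then have "g \<circ> (inv f \<circ> id) \<in> G" by (rule G_mult[OF gB])
  moreover have "g \<circ> (inv f \<circ> id) = (\<lambda>c. w * c)"
    using fb by (simp add: gf o_def bij_is_surj surj_f_inv_f)
  ultimately show ?thesis by simp
qed

lemma pow_cancel:
  fixes w :: "'a::field"
  assumes "w \<noteq> 0" "i \<le> j" "w ^ i = w ^ j"
  shows "w ^ (j - i) = 1"
proof -
  have "w ^ j = w ^ i * w ^ (j - i)" using assms(2) by (simp add: power_add[symmetric])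
  then show ?thesis using assms by simp
qed

lemma order_part:
  fixes w :: "'a::{finite,field}"
  assumes w: "w \<noteq> 0" and gen: "{w ^ k | k. True} = UNIV - {0}"
  shows "w ^ (CARD('a) - 1) = 1 \<and> inj_on (\<lambda>k. w ^ k) {..<CARD('a) - 1}
     \<and> (\<lambda>k. w ^ k) ` {..<CARD('a) - 1} = UNIV - {0}"
proof -
  have "\<not> inj (\<lambda>k::nat. w ^ k)"
  proof
    assume "inj (\<lambda>k::nat. w ^ k)"
    then have "finite (UNIV :: nat set)"
      using finite_imageD[of "\<lambda>k::nat. w ^ k" UNIV] by (simp add: finite_subset)
    then show False by simp
  qed
  then obtain i j :: nat where ij: "i \<noteq> j" "w ^ i = w ^ j" unfolding inj_def by blast
  have "\<exists>e>0. w ^ e = 1"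
  proof (cases "i < j")
    case True then show ?thesis using pow_cancel[OF w, of i j] ij by (intro exI[of _ "j - i"]) auto
  next
    case False then show ?thesis using pow_cancel[OF w, of j i] ij by (intro exI[of _ "i - j"]) auto
  qed
  define e where "e = (LEAST e. 0 < e \<and> w ^ e = 1)"
  have e: "0 < e" "w ^ e = 1" using LeastI_ex[OF \<open>\<exists>e>0. w ^ e = 1\<close>] by (auto simp: e_def)
  have emin: "\<not> (0 < d \<and> w ^ d = 1)" if "d < e" for d
    using not_less_Least[OF that[unfolded e_def]] by (simp add: e_def)
  have injE: "inj_on (\<lambda>k. w ^ k) {..<e}"
  proof (rule inj_onI)
    fix i j assume ij: "i \<in> {..<e}" "j \<in> {..<e}" "w ^ i = w ^ j"
    show "i = j"
    proof (rule ccontr)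
      assume "i \<noteq> j"
      then consider "i < j" | "j < i" by linarith
      then show False
      proof cases
        case 1
        then have "j - i < e" "0 < j - i" "w ^ (j - i) = 1" using ij pow_cancel[OF w, of i j] by auto
        then show False using emin by blast
      next
        case 2
        then have "i - j < e" "0 < i - j" "w ^ (i - j) = 1" using ij pow_cancel[OF w, of j i] by auto
        then show False using emin by blast
      qed
    qed
  qed
  have modk: "w ^ k = w ^ (k mod e)" for k
  proof -
    have "w ^ k = w ^ (e * (k div e) + k mod e)" by simp
    also have "\<dots> = (w ^ e) ^ (k div e) * w ^ (k mod e)"
      by (simp only: power_add power_mult)
    finally have "w ^ k = (w ^ e) ^ (k div e) * w ^ (k mod e)" .
    then show ?thesis using e by simp
  qed
  have im: "UNIV - {0} = (\<lambda>k. w ^ k) ` {..<e}"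
  proof
    show "UNIV - {0} \<subseteq> (\<lambda>k. w ^ k) ` {..<e}"
    proof
      fix x :: 'a assume "x \<in> UNIV - {0}"
      then obtain k where "x = w ^ k" using gen by blast
      then show "x \<in> (\<lambda>k. w ^ k) ` {..<e}" using modk[of k] e(1) by auto
    qed
  next
    show "(\<lambda>k. w ^ k) ` {..<e} \<subseteq> UNIV - {0}" using w by auto
  qed
  then have "card (UNIV - {0::'a}) = e" using card_image[OF injE] by simp
  moreover have "card (UNIV - {0::'a}) = CARD('a) - 1" by (simp add: card_Diff_singleton)
  ultimately have "e = CARD('a) - 1" by simp
  then show ?thesis using e injE im by simp
qed

theorem lemma4p1:
  fixes w :: "'a::{finite,field}"
  assumes "\<exists>(a::'a) (b::'a) (m::nat) (n::nat). a \<noteq> 0 \<and> b \<noteq> 0 \<and> 0 < m \<and> m < n \<and> n < CARD('a)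
             \<and> bij (\<lambda>x. a * x ^ m + b * x ^ n)"
    and "w \<noteq> 0" and "{w ^ k | k. True} = UNIV - {0}"
  shows "(\<lambda>c. w * c) \<in> (G :: ('a \<Rightarrow> 'a) set)
     \<and> (\<exists>cs. distinct cs \<and> length cs = CARD('a) - 1 \<and> (\<lambda>c. w * c) = cycle_of_list cs)"
proof
  from assms(1) obtain a b :: 'a and m n :: nat where ab: "a \<noteq> 0 \<and> b \<noteq> 0 \<and> 0 < m \<and> m < n \<and> n < CARD('a)
             \<and> bij (\<lambda>x. a * x ^ m + b * x ^ n)" by blast
  show "(\<lambda>c. w * c) \<in> (G :: ('a \<Rightarrow> 'a) set)"
    using G_part[of a b m n w] ab assms(2) by blast
next
  define d where "d = CARD('a) - 1"
  have od: "w ^ d = 1" "inj_on (\<lambda>k. w ^ k) {..<d}" "(\<lambda>k. w ^ k) ` {..<d} = UNIV - {0}"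
    using order_part[OF assms(2,3)] by (auto simp: d_def)
  define cs where "cs = map (\<lambda>k. w ^ k) [0..<d]"
  have dist: "distinct cs" unfolding cs_def using od(2)
    by (simp add: distinct_map atLeast0LessThan)
  have len: "length cs = d" by (simp add: cs_def)
  have setcs: "set cs = UNIV - {0}" using od(3) by (simp add: cs_def atLeast0LessThan)
  have "(\<lambda>c. w * c) = cycle_of_list cs"
  proof
    fix c :: 'a
    show "w * c = cycle_of_list cs c"
    proof (cases "c = 0")
      case True
      then have "c \<notin> set cs" using setcs by simp
      then show ?thesis using True id_outside_supp by simp
    next
      case False
      then have "c \<in> set cs" using setcs by simp
      then obtain i where i: "i < d" "c = cs ! i" using len by (auto simp: in_set_conv_nth)
      have "map (cycle_of_list cs ^^ 1) cs = rotate 1 cs" by (rule cyclic_rotation[OF dist])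
      then have "map (cycle_of_list cs) cs = rotate1 cs" by simp
      then have "map (cycle_of_list cs) cs ! i = rotate1 cs ! i" by simp
      then have "cycle_of_list cs (cs ! i) = rotate1 cs ! i"
        using i len by simp
      also have "\<dots> = cs ! (Suc i mod d)" using i len by (simp add: nth_rotate1)
      also have "\<dots> = w ^ (Suc i mod d)" using i by (simp add: cs_def)
      also have "\<dots> = w * c"
      proof (cases "Suc i = d")
        case True
        have "w * c = w ^ Suc i" using i by (simp add: cs_def)
        then show ?thesis using True od(1) by simp
      next
        case False then have "Suc i < d" using i by simp
        then show ?thesis using i by (simp add: cs_def)
      qed
      finally show ?thesis using i by simp
    qed
  qed
  then show "\<exists>cs. distinct cs \<and> length cs = CARD('a) - 1 \<and> (\<lambda>c. w * c) = cycle_of_list cs"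
    using dist len d_def by blast
qed

end
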